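(* Let $t$ be a positive integer and let $G$ be a finite graph of NLC-width at most $t$. Then the 2VC-dimension of the hypergraph of balls in $G$ is at most $6t+2$.
   Context: The hypergraph of balls in $G$ has vertex set $V(G)$ and hyperedges all $B_G(c,r)=\{v:\mathrm{dist}_G(c,v)\le r\}$ for $c\in V(G)$ and integers $r$. A set $S\subseteq V(H)$ is 2-shattered by a hypergraph $H$ if for all distinct $s_1,s_2\in S$ there is $e\in E(H)$ with $e\cap S=\{s_1,s_2\}$; the 2VC-dimension of $H$ is the maximum size of a 2-shattered set. An NLC-decomposition of $G$ is a tuple $(T,Q,\alpha,\beta,R)$ where $T$ is a rooted binary tree (each node has at most one left and at most one right child) with leaf set $V(G)$, $Q$ is a finite label set, $\alpha:V(G)\to Q$, $\beta$ assigns to each 2-element subset of $V(T)$ a map $Q\to Q$, and $R$ assigns to each node a subset of $Q\times Q$, such that: (nlc1) if $u$ is an ancestor of $v\ne u$ and $u=u_0,\dots,u_n=v$ is the path between them, then $\beta(\{u_0,u_1\})\circ\cdots\circ\beta(\{u_{n-1},u_n\})=\beta(\{u,v\})$; (nlc2) for distinct $x,y\in V(G)$ with lowest common ancestor $u$, $x$ a descendant of the left child and $y$ of the right child of $u$, $xy\in E(G)$ iff $(\beta(\{u,x\})(\alpha(x)),\beta(\{u,y\})(\alpha(y)))\in R(u)$. The NLC-width of $G$ is the minimum $|Q|$ over NLC-decompositions of $G$. *)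

theory Defs
  imports Main "HOL-Library.Sublist"
begin

definition graph :: "'a set \<Rightarrow> ('a \<Rightarrow> 'a \<Rightarrow> bool) \<Rightarrow> bool" where
  "graph V E \<longleftrightarrow> finite V \<and> (\<forall>x y. E x y \<longrightarrow> x \<in> V \<and> y \<in> V)
     \<and> (\<forall>x y. E x y \<longrightarrow> E y x) \<and> (\<forall>x. \<not> E x x)"

fun walk :: "'a set \<Rightarrow> ('a \<Rightarrow> 'a \<Rightarrow> bool) \<Rightarrow> nat \<Rightarrow> 'a \<Rightarrow> 'a \<Rightarrow> bool" where
  "walk V E 0 c v \<longleftrightarrow> c = v \<and> c \<in> V"
| "walk V E (Suc n) c v \<longleftrightarrow> (\<exists>w. walk V E n c w \<and> E w v \<and> v \<in> V)"

text \<open>Ball B_G(c,r) = {v. dist_G(c,v) \<le> r}; dist_G(c,v) \<le> r iff some walk of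
  length at most r joins c and v (distance is infinite between components).\<close>
definition ball :: "'a set \<Rightarrow> ('a \<Rightarrow> 'a \<Rightarrow> bool) \<Rightarrow> 'a \<Rightarrow> int \<Rightarrow> 'a set" where
  "ball V E c r = {v \<in> V. \<exists>n. int n \<le> r \<and> walk V E n c v}"

definition ball_edges :: "'a set \<Rightarrow> ('a \<Rightarrow> 'a \<Rightarrow> bool) \<Rightarrow> 'a set set" where
  "ball_edges V E = {ball V E c r | c r. c \<in> V}"

definition two_shattered :: "'a set set \<Rightarrow> 'a set \<Rightarrow> bool" where
  "two_shattered H S \<longleftrightarrow>
     (\<forall>s1\<in>S. \<forall>s2\<in>S. s1 \<noteq> s2 \<longrightarrow> (\<exists>e\<in>H. e \<inter> S = {s1, s2}))"

definition vc2_dim :: "'a set \<Rightarrow> 'a set set \<Rightarrow> nat" where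
  "vc2_dim V H = Max {card S | S. S \<subseteq> V \<and> two_shattered H S}"

text \<open>The rooted binary tree T is represented by its node set of addresses:
  a node is the list of left(False)/right(True) steps from the root.  T is a
  finite, prefix-closed set of bool lists containing the root []; the left
  child of u is u@[False], the right child u@[True]; u is an ancestor of v iff
  u is a prefix of v.\<close>
definition tree_leaves :: "bool list set \<Rightarrow> bool list set" where
  "tree_leaves T = {v \<in> T. \<not> (\<exists>w\<in>T. strict_prefix v w)}"

fun comp_path :: "(bool list set \<Rightarrow> nat \<Rightarrow> nat) \<Rightarrow> bool list list \<Rightarrow> nat \<Rightarrow> nat" where
  "comp_path \<beta> (x # y # rest) = \<beta> {x, y} \<circ> comp_path \<beta> (y # rest)"
| "comp_path \<beta> _ = id"

definition tree_path :: "bool list \<Rightarrow> bool list \<Rightarrow> bool list list" where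
  "tree_path u v = map (\<lambda>i. take i v) [length u..<Suc (length v)]"

definition nlc_decomposition ::
  "'a set \<Rightarrow> ('a \<Rightarrow> 'a \<Rightarrow> bool) \<Rightarrow> bool list set \<Rightarrow> ('a \<Rightarrow> bool list) \<Rightarrow> nat set
   \<Rightarrow> ('a \<Rightarrow> nat) \<Rightarrow> (bool list set \<Rightarrow> nat \<Rightarrow> nat) \<Rightarrow> (bool list \<Rightarrow> (nat \<times> nat) set) \<Rightarrow> bool"
  where
  "nlc_decomposition V E T leaf Q \<alpha> \<beta> R \<longleftrightarrow>
     finite T \<and> [] \<in> T \<and> (\<forall>v\<in>T. \<forall>u. prefix u v \<longrightarrow> u \<in> T)
   \<and> bij_betw leaf V (tree_leaves T)
   \<and> finite Q
   \<and> (\<forall>x\<in>V. \<alpha> x \<in> Q)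
   \<and> (\<forall>u\<in>T. \<forall>v\<in>T. u \<noteq> v \<longrightarrow> (\<forall>q\<in>Q. \<beta> {u, v} q \<in> Q))
   \<and> (\<forall>u\<in>T. R u \<subseteq> Q \<times> Q)
   \<comment> \<open>(nlc1)\<close>
   \<and> (\<forall>u\<in>T. \<forall>v\<in>T. strict_prefix u v \<longrightarrow>
        (\<forall>q\<in>Q. comp_path \<beta> (tree_path u v) q = \<beta> {u, v} q))
   \<comment> \<open>(nlc2)\<close>
   \<and> (\<forall>x\<in>V. \<forall>y\<in>V. \<forall>u\<in>T.
        prefix (u @ [False]) (leaf x) \<and> prefix (u @ [True]) (leaf y) \<longrightarrow>
        (E x y \<longleftrightarrow> (\<beta> {u, leaf x} (\<alpha> x), \<beta> {u, leaf y} (\<alpha> y)) \<in> R u))"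

definition nlc_width :: "'a set \<Rightarrow> ('a \<Rightarrow> 'a \<Rightarrow> bool) \<Rightarrow> nat" where
  "nlc_width V E = (LEAST k. \<exists>T leaf Q \<alpha> \<beta> R.
       nlc_decomposition V E T leaf Q \<alpha> \<beta> R \<and> card Q = k)"

end

theory Submission
  imports Defs
begin


lemma walk_in: "walk W E n x a \<Longrightarrow> x \<in> W \<and> a \<in> W"
  by (induction n arbitrary: a) auto

lemma walk_append:
  "walk W E m y z \<Longrightarrow> walk V E n c y \<Longrightarrow> W \<subseteq> V \<Longrightarrow> walk V E (n + m) c z"
proof (induction m arbitrary: z)
  case 0 then show ?case by simp
next
  case (Suc m)
  then obtain w where "walk W E m y w" "E w z" "z \<in> W" by auto
  with Suc show ?case by auto
qed

lemma walk_split: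
  "walk V E n c a \<Longrightarrow> c \<notin> W \<Longrightarrow> a \<in> W \<Longrightarrow>
   \<exists>n1 y x n2. walk V E n1 c y \<and> y \<notin> W \<and> E y x \<and> x \<in> W \<and> walk W E n2 x a \<and> n = Suc n1 + n2"
proof (induction n arbitrary: a)
  case 0 then show ?case by simp
next
  case (Suc n)
  then obtain w where w: "walk V E n c w" "E w a" "a \<in> V" by auto
  show ?case
  proof (cases "w \<in> W")
    case True
    from Suc.IH[OF w(1) Suc.prems(2) True] obtain n1 y x n2 where
      h: "walk V E n1 c y" "y \<notin> W" "E y x" "x \<in> W" "walk W E n2 x w" "n = Suc n1 + n2" by blast
    have "walk W E (Suc n2) x a" using h(5) w(2) Suc.prems(3) by auto
    with h show ?thesis by (intro exI[of _ n1] exI[of _ y] exI[of _ x] exI[of _ "Suc n2"]) auto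
  next
    case False
    have "walk W E 0 a a" using Suc.prems(3) by simp
    with w False Suc.prems show ?thesis
      by (intro exI[of _ n] exI[of _ w] exI[of _ a] exI[of _ 0]) auto
  qed
qed

definition uniqw :: "'a set \<Rightarrow> ('a \<Rightarrow> 'a \<Rightarrow> bool) \<Rightarrow> ('a \<Rightarrow> bool) \<Rightarrow> 'a set \<Rightarrow> 'a \<Rightarrow> bool" where
  "uniqw W E ent A a \<longleftrightarrow> (\<exists>n. (\<exists>z. ent z \<and> walk W E n z a) \<and>
      (\<forall>a'\<in>A - {a}. \<forall>z. ent z \<longrightarrow> (\<forall>m\<le>n. \<not> walk W E m z a')))"

lemma uniqw_unique:
  assumes "a1 \<in> A" "a2 \<in> A" "uniqw W E ent A a1" "uniqw W E ent A a2"
  shows "a1 = a2"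
proof (rule ccontr)
  assume ne: "a1 \<noteq> a2"
  obtain n1 z1 where h1: "ent z1" "walk W E n1 z1 a1"
    "\<forall>a'\<in>A - {a1}. \<forall>z. ent z \<longrightarrow> (\<forall>m\<le>n1. \<not> walk W E m z a')"
    using assms(3) unfolding uniqw_def by blast
  obtain n2 z2 where h2: "ent z2" "walk W E n2 z2 a2"
    "\<forall>a'\<in>A - {a2}. \<forall>z. ent z \<longrightarrow> (\<forall>m\<le>n2. \<not> walk W E m z a')"
    using assms(4) unfolding uniqw_def by blast
  show False
  proof (cases "n2 \<le> n1")
    case True
    then show False using h1(3) h2(1,2) assms(2) ne by auto
  next
    case False
    then show False using h2(3) h1(1,2) assms(1) ne by auto
  qed
qed

lemma exists_nonuniq:
  assumes "finite Q" "card Q < card A" "finite A"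
  shows "\<exists>a\<in>A. \<not> (\<exists>i\<in>Q. uniqw W E (ent i) A a)"
proof (rule ccontr)
  assume "\<not> ?thesis"
  hence all: "\<forall>a\<in>A. \<exists>i\<in>Q. uniqw W E (ent i) A a" by blast
  define f where "f a = (SOME i. i \<in> Q \<and> uniqw W E (ent i) A a)" for a
  have f: "f a \<in> Q \<and> uniqw W E (ent (f a)) A a" if "a \<in> A" for a
    unfolding f_def using all that by (metis (mono_tags, lifting) someI_ex)
  have "inj_on f A"
    by (rule inj_onI) (metis f uniqw_unique)
  moreover have "f ` A \<subseteq> Q" using f by auto
  ultimately have "card A \<le> card Q" using card_inj_on_le assms(1) by blast
  with assms(2) show False by simp
qed

lemma cross:
  assumes "c \<in> V" "c \<notin> W" "a \<in> A" "A \<subseteq> W" "walk V E n c a" "int n \<le> r"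
    and hyp: "\<And>y x. y \<in> V \<Longrightarrow> y \<notin> W \<Longrightarrow> E y x \<Longrightarrow> x \<in> W \<Longrightarrow>
        (\<exists>i\<in>Q. ent i x \<and> (\<forall>z. ent i z \<longrightarrow> z \<in> W \<longrightarrow> E y z))"
    and WV: "W \<subseteq> V"
  shows "(\<exists>i\<in>Q. uniqw W E (ent i) A a) \<or> (\<exists>a'\<in>A - {a}. a' \<in> ball V E c r)"
proof -
  obtain n1 y x n2 where h: "walk V E n1 c y" "y \<notin> W" "E y x" "x \<in> W" "walk W E n2 x a"
    "n = Suc n1 + n2"
    using walk_split[OF assms(5,2)] assms(3,4) by blast
  have "y \<in> V" using walk_in[OF h(1)] by simp
  then obtain i where i: "i \<in> Q" "ent i x" "\<forall>z. ent i z \<longrightarrow> z \<in> W \<longrightarrow> E y z"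
    using hyp h by blast
  show ?thesis
  proof (cases "uniqw W E (ent i) A a")
    case True then show ?thesis using i by blast
  next
    case False
    then obtain a' z m where a': "a' \<in> A - {a}" "ent i z" "m \<le> n2" "walk W E m z a'"
      unfolding uniqw_def using i(2) h(5) by blast
    have zW: "z \<in> W" "a' \<in> W" using walk_in[OF a'(4)] by auto
    have "walk V E (Suc n1) c z" using h(1) i(3) a'(2) zW WV by auto
    hence "walk V E (Suc n1 + m) c a'" using walk_append[OF a'(4)] WV by blast
    moreover have "int (Suc n1 + m) \<le> r" using assms(6) h(6) a'(3) by simp
    ultimately have "a' \<in> ball V E c r" unfolding ball_def using zW WV by blast
    with a' show ?thesis by blast
  qed
qed



lemma comp_path_app:
  "comp_path \<beta> (xs @ z # ys) = comp_path \<beta> (xs @ [z]) \<circ> comp_path \<beta> (z # ys)"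
proof (induction xs)
  case Nil then show ?case by simp
next
  case (Cons x xs)
  then show ?case by (cases xs) (auto simp: comp_assoc)
qed

lemma tree_path_split:
  assumes "prefix w u" "prefix u v"
  shows "comp_path \<beta> (tree_path w v) = comp_path \<beta> (tree_path w u) \<circ> comp_path \<beta> (tree_path u v)"
proof -
  define f where "f i = take i v" for i
  have lw: "length w \<le> length u" "length u \<le> length v"
    using assms prefix_length_le by blast+
  have u: "u = take (length u) v" using assms(2) by (metis append_eq_conv_conj prefixE)
  have tu: "take i u = take i v" if "i \<le> length u" for i
    using u that by (metis min.absorb1 take_take)
  have e1: "[length w..<Suc (length v)] = [length w..<length u] @ length u # [Suc (length u)..<Suc (length v)]"
  proof -
    have "[length w..<Suc (length v)] = [length w..<length u] @ [length u..<Suc (length v)]"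
      using upt_add_eq_append[of "length w" "length u" "Suc (length v) - length u"] lw by simp
    also have "[length u..<Suc (length v)] = length u # [Suc (length u)..<Suc (length v)]"
      using lw by (simp add: upt_conv_Cons)
    finally show ?thesis .
  qed
  have e2: "[length w..<Suc (length u)] = [length w..<length u] @ [length u]"
    using lw by simp
  have e3: "[length u..<Suc (length v)] = length u # [Suc (length u)..<Suc (length v)]"
    using lw by (simp add: upt_conv_Cons)
  have A: "tree_path w v = map f [length w..<length u] @ u # map f [Suc (length u)..<Suc (length v)]"
    unfolding tree_path_def e1 f_def using u by simp
  have B: "tree_path w u = map f [length w..<length u] @ [u]"
    unfolding tree_path_def e2 f_def using tu by simp
  have C: "tree_path u v = u # map f [Suc (length u)..<Suc (length v)]"
    unfolding tree_path_def e3 f_def using u by simp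
  show ?thesis unfolding A B C by (rule comp_path_app)
qed



lemma label_at:
  assumes D: "nlc_decomposition V E T leaf Q \<alpha> \<beta> R"
    and "x \<in> V" "w \<in> T" "u \<in> T" "strict_prefix w u" "prefix u (leaf x)" "leaf x \<noteq> u"
  shows "\<beta> {w, leaf x} (\<alpha> x) = comp_path \<beta> (tree_path w u) (\<beta> {u, leaf x} (\<alpha> x))"
proof -
  have lT: "leaf x \<in> T" using D assms(2) unfolding nlc_decomposition_def bij_betw_def tree_leaves_def by blast
  have aQ: "\<alpha> x \<in> Q" using D assms(2) unfolding nlc_decomposition_def by blast
  have n1: "\<forall>u\<in>T. \<forall>v\<in>T. strict_prefix u v \<longrightarrow>
        (\<forall>q\<in>Q. comp_path \<beta> (tree_path u v) q = \<beta> {u, v} q)"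
    using D unfolding nlc_decomposition_def by blast
  have s1: "strict_prefix u (leaf x)" using assms(6,7) by (simp add: strict_prefix_def)
  have s2: "strict_prefix w (leaf x)" using assms(5,6) s1 by (meson prefix_order.less_le_trans)
  have "\<beta> {w, leaf x} (\<alpha> x) = comp_path \<beta> (tree_path w (leaf x)) (\<alpha> x)"
    using n1 assms(3) lT s2 aQ by metis
  also have "\<dots> = comp_path \<beta> (tree_path w u) (comp_path \<beta> (tree_path u (leaf x)) (\<alpha> x))"
    using tree_path_split[of w u "leaf x" \<beta>] assms(5,6) by (simp add: strict_prefix_def)
  also have "comp_path \<beta> (tree_path u (leaf x)) (\<alpha> x) = \<beta> {u, leaf x} (\<alpha> x)"
    using n1 assms(4) lT s1 aQ by metis
  finally show ?thesis .
qed

lemma twin: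
  assumes D: "nlc_decomposition V E T leaf Q \<alpha> \<beta> R" and G: "graph V E" and uT: "u \<in> T"
    and xV: "x \<in> V" and x'V: "x' \<in> V" and yV: "y \<in> V"
    and px: "prefix u (leaf x)" and px': "prefix u (leaf x')"
    and nx: "leaf x \<noteq> u" and nx': "leaf x' \<noteq> u" and npy: "\<not> prefix u (leaf y)"
    and lab: "\<beta> {u, leaf x} (\<alpha> x) = \<beta> {u, leaf x'} (\<alpha> x')"
    and exy: "E x y"
  shows "E x' y"
proof -
  have leaves: "\<forall>z\<in>V. leaf z \<in> T \<and> \<not> (\<exists>w\<in>T. strict_prefix (leaf z) w)"
    using D unfolding nlc_decomposition_def bij_betw_def tree_leaves_def by blast
  have pc: "\<forall>v\<in>T. \<forall>u. prefix u v \<longrightarrow> u \<in> T" using D unfolding nlc_decomposition_def by blast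
  have n2: "\<forall>x\<in>V. \<forall>y\<in>V. \<forall>u\<in>T.
        prefix (u @ [False]) (leaf x) \<and> prefix (u @ [True]) (leaf y) \<longrightarrow>
        (E x y \<longleftrightarrow> (\<beta> {u, leaf x} (\<alpha> x), \<beta> {u, leaf y} (\<alpha> y)) \<in> R u)"
    using D unfolding nlc_decomposition_def by blast
  have sym: "\<And>a b. E a b \<Longrightarrow> E b a" using G unfolding graph_def by blast
  define w where "w = longest_common_prefix u (leaf y)"
  obtain u' where u': "u = w @ u'" using longest_common_prefix_prefix1 w_def prefixE by metis
  obtain y' where y': "leaf y = w @ y'" using longest_common_prefix_prefix2 w_def prefixE by metis
  have u'ne: "u' \<noteq> []" using u' y' npy by auto
  have y'ne: "y' \<noteq> []"
  proof
    assume "y' = []"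
    hence "strict_prefix (leaf y) u" using u' y' u'ne by (simp add: strict_prefix_def)
    thus False using leaves yV uT by blast
  qed
  have hd: "hd u' \<noteq> hd y'"
  proof
    assume h: "hd u' = hd y'"
    have "prefix (w @ [hd u']) u" using u' u'ne by (cases u') auto
    moreover have "prefix (w @ [hd u']) (leaf y)" using y' y'ne h by (cases y') auto
    ultimately have "prefix (w @ [hd u']) w"
      using longest_common_prefix_max_prefix w_def by metis
    thus False using prefix_length_le by fastforce
  qed
  define bb where "bb = hd u'"
  have pu: "prefix (w @ [bb]) u" using u' u'ne bb_def by (cases u') auto
  have py: "prefix (w @ [\<not> bb]) (leaf y)" using y' y'ne hd bb_def by (cases y') auto
  have wT: "w \<in> T" using pc uT u' by auto
  have swu: "strict_prefix w u" using u' u'ne by (simp add: strict_prefix_def)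
  have eqw: "\<beta> {w, leaf x} (\<alpha> x) = \<beta> {w, leaf x'} (\<alpha> x')"
    using label_at[OF D xV wT uT swu px nx] label_at[OF D x'V wT uT swu px' nx'] lab by simp
  have pbx: "prefix (w @ [bb]) (leaf x)" "prefix (w @ [bb]) (leaf x')"
    using pu px px' prefix_order.trans by blast+
  show ?thesis
  proof (cases bb)
    case False
    have q: "prefix (w @ [False]) (leaf x)" "prefix (w @ [False]) (leaf x')" "prefix (w @ [True]) (leaf y)"
      using pbx py False by simp_all
    have a: "E x y \<longleftrightarrow> (\<beta> {w, leaf x} (\<alpha> x), \<beta> {w, leaf y} (\<alpha> y)) \<in> R w"
      using n2 xV yV wT q by blast
    have b: "E x' y \<longleftrightarrow> (\<beta> {w, leaf x'} (\<alpha> x'), \<beta> {w, leaf y} (\<alpha> y)) \<in> R w"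
      using n2 x'V yV wT q by blast
    show ?thesis using a b eqw exy by simp
  next
    case True
    have q: "prefix (w @ [True]) (leaf x)" "prefix (w @ [True]) (leaf x')" "prefix (w @ [False]) (leaf y)"
      using pbx py True by simp_all
    have a: "E y x \<longleftrightarrow> (\<beta> {w, leaf y} (\<alpha> y), \<beta> {w, leaf x} (\<alpha> x)) \<in> R w"
      using n2 xV yV wT q by blast
    have b: "E y x' \<longleftrightarrow> (\<beta> {w, leaf y} (\<alpha> y), \<beta> {w, leaf x'} (\<alpha> x')) \<in> R w"
      using n2 x'V yV wT q by blast
    show ?thesis using a b eqw exy sym by metis
  qed
qed



lemma comp_path_id: "comp_path (\<lambda>_ q. q) xs = id"
  by (induction "\<lambda>_::bool list set. \<lambda>q::nat. q" xs rule: comp_path.induct) (auto simp: id_def)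

lemma nlc_exists:
  assumes G: "graph V E" and ne: "V \<noteq> {}"
  shows "\<exists>T leaf Q \<alpha> \<beta> R. nlc_decomposition V E T leaf Q \<alpha> \<beta> R"
proof -
  have fin: "finite V" using G unfolding graph_def by blast
  define n where "n = card V"
  obtain h where h: "bij_betw h {0..<n} V" using ex_bij_betw_nat_finite[OF fin] n_def by blast
  define idx where "idx = the_inv_into {0..<n} h"
  have bi: "bij_betw idx V {0..<n}" unfolding idx_def by (rule bij_betw_the_inv_into[OF h])
  have hidx: "h (idx x) = x" if "x \<in> V" for x
    unfolding idx_def using h that by (simp add: f_the_inv_into_f_bij_betw)
  define lf where "lf x = replicate (idx x) True @ replicate (n - idx x) False" for x
  have len: "length (lf x) = n" if "x \<in> V" for x
  proof -
    have "idx x \<in> {0..<n}" using bi that unfolding bij_betw_def by auto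
    thus ?thesis unfolding lf_def by simp
  qed
  have cnt: "length (filter id (lf x)) = idx x" for x
    unfolding lf_def by simp
  have inj: "inj_on lf V"
  proof (rule inj_onI)
    fix x y assume "x \<in> V" "y \<in> V" "lf x = lf y"
    hence "idx x = idx y" using cnt by metis
    thus "x = y" using bi \<open>x \<in> V\<close> \<open>y \<in> V\<close> unfolding bij_betw_def inj_on_def by blast
  qed
  define T where "T = (\<Union>l\<in>lf ` V. set (prefixes l))"
  have memT: "p \<in> T \<longleftrightarrow> (\<exists>x\<in>V. prefix p (lf x))" for p
    unfolding T_def by auto
  have leaves: "tree_leaves T = lf ` V"
  proof
    show "tree_leaves T \<subseteq> lf ` V"
    proof
      fix v assume "v \<in> tree_leaves T"
      hence v: "v \<in> T" "\<not> (\<exists>w\<in>T. strict_prefix v w)" unfolding tree_leaves_def by auto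
      then obtain x where x: "x \<in> V" "prefix v (lf x)" using memT[of v] by blast
      have "lf x \<in> T" using memT[of "lf x"] x by blast
      hence "v = lf x" using v(2) x(2) by (simp add: strict_prefix_def)
      thus "v \<in> lf ` V" using x by blast
    qed
  next
    show "lf ` V \<subseteq> tree_leaves T"
    proof
      fix v assume "v \<in> lf ` V"
      then obtain x where x: "x \<in> V" "v = lf x" by blast
      have "v \<in> T" using memT[of v] x by blast
      moreover have "\<not> strict_prefix v w" if wT: "w \<in> T" for w
      proof
        assume sp: "strict_prefix v w"
        obtain y where yy: "y \<in> V" "prefix w (lf y)" using memT[of w] wT by blast
        have "length w \<le> length (lf y)" using yy(2) by (rule prefix_length_le)
        hence "length w \<le> n" using len[OF yy(1)] by simp
        moreover have "length v < length w" using sp prefix_length_less by blast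
        ultimately show False using len[OF x(1)] x(2) by simp
      qed
      ultimately show "v \<in> tree_leaves T" unfolding tree_leaves_def by blast
    qed
  qed
  define R where "R = (\<lambda>_::bool list. {(i, j). i < n \<and> j < n \<and> E (h i) (h j)})"
  have idxlt: "idx x < n" if "x \<in> V" for x using bi that unfolding bij_betw_def by auto
  have "nlc_decomposition V E T lf {0..<n} idx (\<lambda>_ q. q) R"
    unfolding nlc_decomposition_def
  proof (intro conjI)
    show "finite T" unfolding T_def using fin by blast
    show "[] \<in> T" unfolding memT using ne by (meson Nil_prefix ex_in_conv)
    show "\<forall>v\<in>T. \<forall>u. prefix u v \<longrightarrow> u \<in> T" 
    proof (intro ballI allI impI)
      fix v u assume vu: "v \<in> T" "prefix u v"
      then obtain x where x: "x \<in> V" "prefix v (lf x)" using memT[of v] by blast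
      have "prefix u (lf x)" using vu(2) x(2) by (rule prefix_order.trans)
      then show "u \<in> T" using memT[of u] x(1) by blast
    qed
    show "bij_betw lf V (tree_leaves T)" using inj leaves by (simp add: bij_betw_def)
    show "finite {0..<n}" by simp
    show "\<forall>x\<in>V. idx x \<in> {0..<n}" using idxlt by auto
    show "\<forall>u\<in>T. \<forall>v\<in>T. u \<noteq> v \<longrightarrow> (\<forall>q\<in>{0..<n}. q \<in> {0..<n})" by blast
    show "\<forall>u\<in>T. R u \<subseteq> {0..<n} \<times> {0..<n}" unfolding R_def by auto
    show "\<forall>u\<in>T. \<forall>v\<in>T. strict_prefix u v \<longrightarrow>
        (\<forall>q\<in>{0..<n}. comp_path (\<lambda>_ q. q) (tree_path u v) q = q)"
      by (simp add: comp_path_id)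
    show "\<forall>x\<in>V. \<forall>y\<in>V. \<forall>u\<in>T.
        prefix (u @ [False]) (lf x) \<and> prefix (u @ [True]) (lf y) \<longrightarrow>
        (E x y \<longleftrightarrow> (idx x, idx y) \<in> R u)"
      unfolding R_def using idxlt hidx by auto
  qed
  thus ?thesis by blast
qed



theorem propositionA1:
  fixes V :: "'a set" and E :: "'a \<Rightarrow> 'a \<Rightarrow> bool" and t :: nat
  assumes "t \<ge> 1"
    and "graph V E"
    and "nlc_width V E \<le> t"
  shows "vc2_dim V (ball_edges V E) \<le> 6 * t + 2"
proof -
  have finV: "finite V" using assms(2) unfolding graph_def by blast
  have sym: "\<And>a b. E a b \<Longrightarrow> E b a" using assms(2) unfolding graph_def by blast
  have key: "card S \<le> 3 * t" if SV: "S \<subseteq> V" and sh: "two_shattered (ball_edges V E) S" for S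
  proof (rule ccontr)
    assume big: "\<not> card S \<le> 3 * t"
    have finS: "finite S" using SV finV finite_subset by blast
    have "S \<noteq> {}" using big by auto
    hence Vne: "V \<noteq> {}" using SV by blast
    define P where "P k \<longleftrightarrow> (\<exists>T leaf Q \<alpha> \<beta> R. nlc_decomposition V E T leaf Q \<alpha> \<beta> R \<and> card Q = k)" for k
    have "\<exists>k. P k" unfolding P_def using nlc_exists[OF assms(2) Vne] by blast
    hence "P (LEAST k. P k)" by (rule LeastI_ex)
    hence "P (nlc_width V E)" unfolding nlc_width_def P_def by simp
    then obtain T leaf Q \<alpha> \<beta> R where D: "nlc_decomposition V E T leaf Q \<alpha> \<beta> R"
      and cQ0: "card Q = nlc_width V E" unfolding P_def by blast
    have cQ: "card Q \<le> t" using cQ0 assms(3) by simp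
    have finQ: "finite Q" and finT: "finite T" and rootT: "[] \<in> T"
      and pc: "\<forall>v\<in>T. \<forall>u. prefix u v \<longrightarrow> u \<in> T"
      and bl: "bij_betw leaf V (tree_leaves T)"
      and aQ: "\<forall>x\<in>V. \<alpha> x \<in> Q"
      and bQ: "\<forall>u\<in>T. \<forall>v\<in>T. u \<noteq> v \<longrightarrow> (\<forall>q\<in>Q. \<beta> {u, v} q \<in> Q)"
      using D unfolding nlc_decomposition_def by blast+
    have leaves: "\<And>z. z \<in> V \<Longrightarrow> leaf z \<in> T \<and> \<not> (\<exists>w\<in>T. strict_prefix (leaf z) w)"
      using bl unfolding bij_betw_def tree_leaves_def by blast
    have injl: "inj_on leaf V" using bl unfolding bij_betw_def by blast
    define Au where "Au u = {s \<in> S. prefix u (leaf s)}" for u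
    define U where "U = {u \<in> T. t < card (Au u)}"
    have "Au [] = S" unfolding Au_def by auto
    hence "[] \<in> U" unfolding U_def using rootT big by simp
    have finU: "finite U" using finT unfolding U_def by simp
    define m where "m = Max (length ` U)"
    have "m \<in> length ` U" unfolding m_def using finU \<open>[] \<in> U\<close> by (intro Max_in) auto
    then obtain u where uU: "u \<in> U" and um: "length u = m" by blast
    have maxu: "length v \<le> length u" if "v \<in> U" for v
      unfolding um m_def using finU that by simp
    have uT: "u \<in> T" and tA: "t < card (Au u)" using uU unfolding U_def by auto
    have child: "card (Au (u @ [c])) \<le> t" for c
    proof (cases "u @ [c] \<in> T")
      case True
      have "u @ [c] \<notin> U" using maxu by fastforce
      thus ?thesis using True unfolding U_def by auto
    next
      case False
      have "Au (u @ [c]) = {}"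
      proof (rule ccontr)
        assume "Au (u @ [c]) \<noteq> {}"
        then obtain s where "s \<in> S" "prefix (u @ [c]) (leaf s)" unfolding Au_def by blast
        moreover have "leaf s \<in> T" using leaves SV \<open>s \<in> S\<close> by blast
        ultimately show False using pc False by blast
      qed
      thus ?thesis by simp
    qed
    have notleaf: "leaf x \<noteq> u" if "x \<in> V" for x
    proof
      assume lx: "leaf x = u"
      have "Au u \<subseteq> {x}"
      proof
        fix s assume "s \<in> Au u"
        hence s: "s \<in> S" "prefix u (leaf s)" unfolding Au_def by auto
        have sV: "s \<in> V" using s SV by blast
        have "leaf s \<in> T" using leaves sV by blast
        hence "\<not> strict_prefix (leaf x) (leaf s)" using leaves that by blast
        hence "leaf s = leaf x" using s(2) lx by (simp add: strict_prefix_def)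
        thus "s \<in> {x}" using injl sV that unfolding inj_on_def by blast
      qed
      hence "card (Au u) \<le> 1" using card_mono[of "{x}" "Au u"] by simp
      thus False using tA assms(1) by simp
    qed
    have split: "Au u \<subseteq> Au (u @ [False]) \<union> Au (u @ [True])"
    proof
      fix s assume "s \<in> Au u"
      hence s: "s \<in> S" "prefix u (leaf s)" unfolding Au_def by auto
      have "leaf s \<noteq> u" using notleaf s SV by blast
      then obtain c rest where "leaf s = u @ c # rest" using s(2)
        by (metis append_Nil2 neq_Nil_conv prefixE)
      hence "prefix (u @ [c]) (leaf s)" by simp
      thus "s \<in> Au (u @ [False]) \<union> Au (u @ [True])" using s(1) unfolding Au_def by (cases c) auto
    qed
    have "card (Au u) \<le> card (Au (u @ [False]) \<union> Au (u @ [True]))"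
      using split finS by (intro card_mono) (auto simp: Au_def)
    also have "\<dots> \<le> card (Au (u @ [False])) + card (Au (u @ [True]))" by (rule card_Un_le)
    also have "\<dots> \<le> 2 * t" using child[of False] child[of True] by simp
    finally have cAu: "card (Au u) \<le> 2 * t" .
    define X where "X = {x \<in> V. prefix u (leaf x)}"
    define A where "A = Au u"
    define B where "B = S - X"
    have AX: "A = S \<inter> X" unfolding A_def Au_def X_def using SV by auto
    have XV: "X \<subseteq> V" unfolding X_def by auto
    have finA: "finite A" and finB: "finite B" using finS unfolding A_def Au_def B_def by auto
    have "card S = card A + card B"
      unfolding AX B_def using finS by (metis Diff_Int2 Int_commute card_Diff_subset_Int card_Int_Diff inf.idem finite_Int)
    hence cB: "t < card B" using big cAu unfolding A_def by simp
    have cA: "t < card A" using tA unfolding A_def .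
    define lab where "lab x = \<beta> {u, leaf x} (\<alpha> x)" for x
    have labQ: "lab x \<in> Q" if "x \<in> X" for x
    proof -
      have "x \<in> V" using that XV by blast
      thus ?thesis unfolding lab_def using bQ uT leaves notleaf aQ by metis
    qed
    have twin': "E x' y" if "x \<in> X" "x' \<in> X" "y \<in> V" "y \<notin> X" "lab x = lab x'" "E x y" for x x' y
      using twin[OF D assms(2) uT, of x x' y] that notleaf unfolding X_def lab_def by auto
    define entA where "entA i z \<longleftrightarrow> z \<in> X \<and> lab z = i" for i z
    define entB where "entB i z \<longleftrightarrow> z \<in> V - X \<and> (\<exists>x\<in>X. lab x = i \<and> E x z)" for i z
    obtain a where aA: "a \<in> A" and na: "\<not> (\<exists>i\<in>Q. uniqw X E (entA i) A a)"
      using exists_nonuniq[OF finQ _ finA] cA cQ by fastforce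
    obtain b where bB: "b \<in> B" and nb: "\<not> (\<exists>i\<in>Q. uniqw (V - X) E (entB i) B b)"
      using exists_nonuniq[OF finQ _ finB] cB cQ by fastforce
    have aX: "a \<in> X" "a \<in> S" using aA AX by auto
    have bX: "b \<notin> X" "b \<in> S" using bB B_def by auto
    have "a \<noteq> b" using aX bX by blast
    then obtain e where "e \<in> ball_edges V E" "e \<inter> S = {a, b}"
      using sh aX bX unfolding two_shattered_def by blast
    then obtain c r where cV: "c \<in> V" and eS: "ball V E c r \<inter> S = {a, b}"
      unfolding ball_edges_def by blast
    have "a \<in> ball V E c r" "b \<in> ball V E c r" using eS by auto
    then obtain na' nb' where wa: "walk V E na' c a" "int na' \<le> r" and wb: "walk V E nb' c b" "int nb' \<le> r"
      unfolding ball_def by blast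
    show False
    proof (cases "c \<in> X")
      case True
      have "(\<exists>i\<in>Q. uniqw (V - X) E (entB i) B b) \<or> (\<exists>b'\<in>B - {b}. b' \<in> ball V E c r)"
      proof (rule cross[OF cV _ bB _ wb])
        show "c \<notin> V - X" using True by blast
        show "B \<subseteq> V - X" using SV unfolding B_def by blast
        show "V - X \<subseteq> V" by blast
        fix y x assume h: "y \<in> V" "y \<notin> V - X" "E y x" "x \<in> V - X"
        have yX: "y \<in> X" using h by blast
        show "\<exists>i\<in>Q. entB i x \<and> (\<forall>z. entB i z \<longrightarrow> z \<in> V - X \<longrightarrow> E y z)"
        proof (intro bexI[of _ "lab y"] conjI allI impI)
          show "lab y \<in> Q" using labQ yX .
          show "entB (lab y) x" unfolding entB_def using h yX by blast
          fix z assume "entB (lab y) z" "z \<in> V - X"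
          then obtain x' where "x' \<in> X" "lab x' = lab y" "E x' z" unfolding entB_def by blast
          thus "E y z" using twin'[of x' y z] yX \<open>z \<in> V - X\<close> by simp
        qed
      qed
      then obtain b' where "b' \<in> B - {b}" "b' \<in> ball V E c r" using nb by blast
      hence "b' \<in> {a, b}" "b' \<noteq> b" "b' \<noteq> a" using eS aX unfolding B_def by auto
      thus False by blast
    next
      case False
      have "(\<exists>i\<in>Q. uniqw X E (entA i) A a) \<or> (\<exists>a'\<in>A - {a}. a' \<in> ball V E c r)"
      proof (rule cross[OF cV False aA _ wa])
        show "A \<subseteq> X" using AX by blast
        show "X \<subseteq> V" by (rule XV)
        fix y x assume h: "y \<in> V" "y \<notin> X" "E y x" "x \<in> X"
        show "\<exists>i\<in>Q. entA i x \<and> (\<forall>z. entA i z \<longrightarrow> z \<in> X \<longrightarrow> E y z)"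
        proof (intro bexI[of _ "lab x"] conjI allI impI)
          show "lab x \<in> Q" using labQ h(4) .
          show "entA (lab x) x" unfolding entA_def using h by blast
          fix z assume "entA (lab x) z" "z \<in> X"
          hence lz: "lab x = lab z" unfolding entA_def by simp
          have exy: "E x y" using sym[OF h(3)] .
          have "E z y" using twin'[OF h(4) \<open>z \<in> X\<close> h(1) h(2) lz exy] .
          thus "E y z" using sym by blast
        qed
      qed
      then obtain a' where "a' \<in> A - {a}" "a' \<in> ball V E c r" using na by blast
      hence "a' \<in> {a, b}" "a' \<noteq> a" "a' \<noteq> b" using eS bX AX by auto
      thus False by blast
    qed
  qed
  have fin: "finite {card S |S. S \<subseteq> V \<and> two_shattered (ball_edges V E) S}"
  proof (rule finite_subset)
    show "{card S |S. S \<subseteq> V \<and> two_shattered (ball_edges V E) S} \<subseteq> card ` Pow V"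
    proof
      fix k assume "k \<in> {card S |S. S \<subseteq> V \<and> two_shattered (ball_edges V E) S}"
      then obtain S where "k = card S" "S \<subseteq> V" by blast
      thus "k \<in> card ` Pow V" by simp
    qed
    show "finite (card ` Pow V)" using finV by simp
  qed
  have ne: "{card S |S. S \<subseteq> V \<and> two_shattered (ball_edges V E) S} \<noteq> {}"
  proof -
    have "two_shattered (ball_edges V E) {}" unfolding two_shattered_def by simp
    thus ?thesis by blast
  qed
  show ?thesis unfolding vc2_dim_def
  proof (rule Max.boundedI[OF fin ne])
    fix k assume "k \<in> {card S |S. S \<subseteq> V \<and> two_shattered (ball_edges V E) S}"
    then obtain S where S: "k = card S" "S \<subseteq> V" "two_shattered (ball_edges V E) S" by blast
    have "card S \<le> 3 * t" using key[OF S(2) S(3)] .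
    thus "k \<le> 6 * t + 2" using S(1) by simp
  qed
qed

end
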